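(* Let $K$ and $L$ be compact Hausdorff spaces and $\phi:K\to L$ a continuous surjection. If $K$ has the extension property and $L$ is scattered of finite height, then the Banach subalgebra $\phi^*C(L)=\{f\circ\phi: f\in C(L)\}$ of $C(K)$ is complemented in $C(K)$; equivalently, $\phi$ admits an averaging operator, i.e., a bounded linear operator $P:C(K)\to C(L)$ with $P(f\circ\phi)=f$ for all $f\in C(L)$.
   Context: $C(K)$ denotes the Banach space of real-valued continuous functions on $K$ with the supremum norm. For a closed set $F\subseteq K$, an extension operator for $F$ in $K$ is a bounded linear map $E:C(F)\to C(K)$ such that $E(f)|_F=f$ for all $f\in C(F)$. $K$ has the extension property if every nonempty closed subset of $K$ admits an extension operator in $K$. A scattered space $L$ has finite height if $L^{(n)}=\emptyset$ for some finite $n$, where $L^{(n)}$ denotes the $n$-th Cantor--Bendixson derivative (iterated set of non-isolated points). *)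

theory Defs
  imports "HOL-Analysis.Analysis"
begin

text \<open>C(X): real-valued continuous functions on the space X, represented
  extensionally (value 0 outside the underlying set of X).\<close>
definition cspace :: "'a topology \<Rightarrow> ('a \<Rightarrow> real) set" where
  "cspace X = {f. continuous_map X euclideanreal f \<and> (\<forall>x. x \<notin> topspace X \<longrightarrow> f x = 0)}"

definition supnorm :: "'a topology \<Rightarrow> ('a \<Rightarrow> real) \<Rightarrow> real" where
  "supnorm X f = (SUP x\<in>topspace X. \<bar>f x\<bar>)"

definition lin_op :: "'a topology \<Rightarrow> 'b topology \<Rightarrow> (('a \<Rightarrow> real) \<Rightarrow> ('b \<Rightarrow> real)) \<Rightarrow> bool" where
  "lin_op X Y T \<longleftrightarrow>
     (\<forall>f\<in>cspace X. T f \<in> cspace Y) \<and>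
     (\<forall>f\<in>cspace X. \<forall>g\<in>cspace X. \<forall>a b::real.
        T (\<lambda>x. a * f x + b * g x) = (\<lambda>y. a * T f y + b * T g y))"

definition bounded_lin_op :: "'a topology \<Rightarrow> 'b topology \<Rightarrow> (('a \<Rightarrow> real) \<Rightarrow> ('b \<Rightarrow> real)) \<Rightarrow> bool" where
  "bounded_lin_op X Y T \<longleftrightarrow> lin_op X Y T \<and>
     (\<exists>M. \<forall>f\<in>cspace X. supnorm Y (T f) \<le> M * supnorm X f)"

definition extension_operator :: "'a topology \<Rightarrow> 'a set \<Rightarrow> (('a \<Rightarrow> real) \<Rightarrow> ('a \<Rightarrow> real)) \<Rightarrow> bool" where
  "extension_operator K F E \<longleftrightarrow> bounded_lin_op (subtopology K F) K E \<and>
     (\<forall>f\<in>cspace (subtopology K F). \<forall>x\<in>F. E f x = f x)"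

definition extension_property :: "'a topology \<Rightarrow> bool" where
  "extension_property K \<longleftrightarrow>
     (\<forall>F. closedin K F \<and> F \<noteq> {} \<longrightarrow> (\<exists>E. extension_operator K F E))"

definition scattered_space :: "'a topology \<Rightarrow> bool" where
  "scattered_space X \<longleftrightarrow>
     (\<forall>S. S \<subseteq> topspace X \<and> S \<noteq> {} \<longrightarrow> (\<exists>x\<in>S. x \<notin> X derived_set_of S))"

definition cb_derivative :: "'a topology \<Rightarrow> nat \<Rightarrow> 'a set" where
  "cb_derivative X n = ((\<lambda>S. X derived_set_of S) ^^ n) (topspace X)"

definition finite_height :: "'a topology \<Rightarrow> bool" where
  "finite_height X \<longleftrightarrow> (\<exists>n. cb_derivative X n = {})"

definition pullback :: "'a topology \<Rightarrow> ('a \<Rightarrow> 'b) \<Rightarrow> ('b \<Rightarrow> real) \<Rightarrow> ('a \<Rightarrow> real)" where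
  "pullback K \<phi> f = (\<lambda>x. if x \<in> topspace K then f (\<phi> x) else 0)"

definition complemented :: "'a topology \<Rightarrow> ('a \<Rightarrow> real) set \<Rightarrow> bool" where
  "complemented K V \<longleftrightarrow> (\<exists>Q. bounded_lin_op K K Q \<and>
     (\<forall>f\<in>cspace K. Q f \<in> V) \<and> (\<forall>g\<in>V. Q g = g))"

end

theory Submission
  imports Defs
begin

lemma cont_eps:
  assumes "\<And>x e. x \<in> topspace X \<Longrightarrow> e > 0 \<Longrightarrow> \<exists>U. openin X U \<and> x \<in> U \<and> (\<forall>y\<in>U. \<bar>f y - f x\<bar> < e)"
  shows "continuous_map X euclideanreal f"
  unfolding continuous_map_eq_topcontinuous_at topcontinuous_at_def
proof (intro ballI conjI allI impI)
  fix x V assume x: "x \<in> topspace X" and V: "openin euclideanreal V \<and> f x \<in> V"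
  then obtain e where e: "e > 0" "ball (f x) e \<subseteq> V"
    by (meson open_contains_ball open_openin)
  obtain U where "openin X U" "x \<in> U" "\<forall>y\<in>U. \<bar>f y - f x\<bar> < e" using assms[OF x e(1)] by blast
  then show "\<exists>U. openin X U \<and> x \<in> U \<and> (\<forall>y\<in>U. f y \<in> V)"
    using e(2) by (force simp: dist_real_def abs_minus_commute)
qed auto

lemma cspace_bdd:
  assumes "compact_space X" "continuous_map X euclideanreal f"
  shows "bdd_above ((\<lambda>x. \<bar>f x\<bar>) ` topspace X)"
proof -
  have "compactin euclideanreal ((\<lambda>x. \<bar>f x\<bar>) ` topspace X)"
    by (rule image_compactin[of X]) (use assms in \<open>auto simp: compact_space_def intro: continuous_intros\<close>)
  then show ?thesis by (simp add: bounded_imp_bdd_above compact_imp_bounded)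
qed

definition nm :: "'a topology \<Rightarrow> ('a \<Rightarrow> real) \<Rightarrow> real" where
  "nm X f = (if topspace X = {} then 0 else supnorm X f)"

lemma nm_ge:
  assumes "compact_space X" "f \<in> cspace X" "x \<in> topspace X"
  shows "\<bar>f x\<bar> \<le> nm X f"
  using assms cspace_bdd[of X f] unfolding nm_def supnorm_def cspace_def
  by (auto intro: cSUP_upper)

lemma nm_nonneg:
  assumes "compact_space X" "f \<in> cspace X"
  shows "0 \<le> nm X f"
proof (cases "topspace X = {}")
  case False then obtain x where "x \<in> topspace X" by blast
  then show ?thesis using nm_ge[OF assms] by (meson abs_ge_zero order_trans)
qed (simp add: nm_def)

lemma nm_le:
  assumes "\<And>x. x \<in> topspace X \<Longrightarrow> \<bar>f x\<bar> \<le> B" "0 \<le> B"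
  shows "nm X f \<le> B"
  using assms unfolding nm_def supnorm_def by (auto intro: cSUP_least)

lemma lin_zero:
  assumes "lin_op X Y T" "f \<in> cspace X"
  shows "T (\<lambda>x. 0) = (\<lambda>y. 0)"
proof -
  have "T (\<lambda>x. 0 * f x + 0 * f x) = (\<lambda>y. 0 * T f y + 0 * T f y)"
    using assms unfolding lin_op_def by blast
  then show ?thesis by simp
qed

lemma cspace_empty:
  assumes "topspace X = {}" "f \<in> cspace X" shows "f = (\<lambda>x. 0)"
  using assms by (auto simp: cspace_def)

lemma bl_pointwise:
  assumes "bounded_lin_op X Y T" "compact_space X" "compact_space Y"
  shows "\<exists>M\<ge>0. \<forall>f\<in>cspace X. \<forall>y\<in>topspace Y. \<bar>T f y\<bar> \<le> M * nm X f"
proof (cases "topspace X = {}")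
  case True
  have "\<forall>f\<in>cspace X. \<forall>y\<in>topspace Y. \<bar>T f y\<bar> \<le> 0 * nm X f"
    using True assms(1) cspace_empty[OF True] lin_zero[of X Y T]
    unfolding bounded_lin_op_def by fastforce
  then show ?thesis by blast
next
  case False
  obtain M0 where M0: "\<forall>f\<in>cspace X. supnorm Y (T f) \<le> M0 * supnorm X f"
    using assms(1) unfolding bounded_lin_op_def by blast
  have "\<bar>T f y\<bar> \<le> max M0 0 * nm X f" if f: "f \<in> cspace X" and y: "y \<in> topspace Y" for f y
  proof -
    have Tf: "T f \<in> cspace Y" using assms(1) f unfolding bounded_lin_op_def lin_op_def by blast
    have "\<bar>T f y\<bar> \<le> nm Y (T f)" by (rule nm_ge[OF assms(3) Tf y])
    also have "\<dots> = supnorm Y (T f)" using y by (auto simp: nm_def)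
    also have "\<dots> \<le> M0 * supnorm X f" using M0 f by blast
    also have "\<dots> \<le> max M0 0 * supnorm X f"
      using nm_nonneg[OF assms(2) f] False by (intro mult_right_mono) (auto simp: nm_def)
    finally show ?thesis using False by (simp add: nm_def)
  qed
  then show ?thesis by (intro exI[of _ "max M0 0"]) auto
qed

lemma bl_intro:
  assumes "lin_op X Y T" "topspace Y = {} \<Longrightarrow> topspace X = {}"
    "\<And>f y. f \<in> cspace X \<Longrightarrow> y \<in> topspace Y \<Longrightarrow> \<bar>T f y\<bar> \<le> M * nm X f"
  shows "bounded_lin_op X Y T"
  unfolding bounded_lin_op_def
proof (intro conjI assms(1))
  show "\<exists>M. \<forall>f\<in>cspace X. supnorm Y (T f) \<le> M * supnorm X f"
  proof (cases "topspace Y = {}")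
    case True
    then show ?thesis using assms(2) by (intro exI[of _ 1]) (simp add: supnorm_def)
  next
    case False
    have "supnorm Y (T f) \<le> (if topspace X = {} then 0 else M) * supnorm X f" if f: "f \<in> cspace X" for f
      unfolding supnorm_def using False assms(3)[OF f]
      by (intro cSUP_least) (auto simp: nm_def supnorm_def)
    then show ?thesis by blast
  qed
qed

lemma pb_cs:
  assumes "continuous_map K L \<phi>" "f \<in> cspace L"
  shows "pullback K \<phi> f \<in> cspace K"
proof -
  have "continuous_map K euclideanreal (f \<circ> \<phi>)"
    using assms continuous_map_compose unfolding cspace_def by blast
  then have "continuous_map K euclideanreal (pullback K \<phi> f)"
    by (rule continuous_map_eq) (simp add: pullback_def)
  then show ?thesis by (simp add: cspace_def pullback_def)
qed

lemma pb_nm: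
  assumes "compact_space L" "continuous_map K L \<phi>" "f \<in> cspace L"
  shows "nm K (pullback K \<phi> f) \<le> nm L f"
proof (rule nm_le)
  fix x assume x: "x \<in> topspace K"
  then have "\<phi> x \<in> topspace L" using assms(2) by (meson continuous_map_image_subset_topspace image_subset_iff)
  then show "\<bar>pullback K \<phi> f x\<bar> \<le> nm L f" using x nm_ge[OF assms(1,3)] by (simp add: pullback_def)
qed (rule nm_nonneg[OF assms(1,3)])

lemma pb_lin:
  "pullback K \<phi> (\<lambda>y. a * f y + b * g y) = (\<lambda>x. a * pullback K \<phi> f x + b * pullback K \<phi> g x)"
  by (auto simp: pullback_def fun_eq_iff)

lemma ext_empty: "extension_operator K {} (\<lambda>f x. 0)"
  unfolding extension_operator_def
proof (intro conjI ballI)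
  show "bounded_lin_op (subtopology K {}) K (\<lambda>f x. 0)"
    by (rule bl_intro[where M=0]) (auto simp: lin_op_def cspace_def)
qed auto

definition extp :: "'a topology \<Rightarrow> bool" where
  "extp K \<longleftrightarrow> (\<forall>F. closedin K F \<longrightarrow> (\<exists>E. extension_operator K F E))"

lemma extp_of: "extension_property K \<Longrightarrow> extp K"
  unfolding extension_property_def extp_def
proof (intro allI impI)
  fix F assume "\<forall>F. closedin K F \<and> F \<noteq> {} \<longrightarrow> (\<exists>E. extension_operator K F E)" "closedin K F"
  then show "\<exists>E. extension_operator K F E"
    using ext_empty[of K] by (cases "F = {}") blast+
qed

lemma extp_sub:
  assumes "extp K" "compact_space K" "closedin K T"
  shows "extp (subtopology K T)"
  unfolding extp_def
proof (intro allI impI)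
  fix F assume F: "closedin (subtopology K T) F"
  then have FK: "closedin K F" and FT: "F \<subseteq> T" using closedin_closed_subtopology[OF assms(3)] by auto
  obtain E where E: "extension_operator K F E" using assms(1) FK unfolding extp_def by blast
  have sub: "subtopology (subtopology K T) F = subtopology K F"
    using FT by (simp add: subtopology_subtopology Int_absorb1)
  have cF: "compact_space (subtopology K F)"
    by (simp add: FK assms(2) closedin_compact_space compact_space_subtopology)
  have TK: "T \<subseteq> topspace K" using assms(3) closedin_subset by auto
  have EB: "bounded_lin_op (subtopology K F) K E" and Eext: "\<forall>f\<in>cspace (subtopology K F). \<forall>x\<in>F. E f x = f x"
    using E unfolding extension_operator_def by auto
  obtain M where M: "\<forall>f\<in>cspace (subtopology K F). \<forall>y\<in>topspace K. \<bar>E f y\<bar> \<le> M * nm (subtopology K F) f"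
    using bl_pointwise[OF EB cF assms(2)] by blast
  have Ecs: "E f \<in> cspace K" if "f \<in> cspace (subtopology K F)" for f
    using EB that unfolding bounded_lin_op_def lin_op_def by blast
  have Elin: "E (\<lambda>x. a * f x + b * g x) = (\<lambda>y. a * E f y + b * E g y)"
    if "f \<in> cspace (subtopology K F)" "g \<in> cspace (subtopology K F)" for f g a b
    using EB that unfolding bounded_lin_op_def lin_op_def by blast
  define E' where "E' f = (\<lambda>x. if x \<in> T then E f x else 0)" for f
  have "extension_operator (subtopology K T) F E'"
    unfolding extension_operator_def sub
  proof (intro conjI ballI)
    show "E' f x = f x" if "f \<in> cspace (subtopology K F)" "x \<in> F" for f x
      using that Eext FT by (auto simp: E'_def)
    show "bounded_lin_op (subtopology K F) (subtopology K T) E'"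
    proof (rule bl_intro[where M=M])
      show "lin_op (subtopology K F) (subtopology K T) E'"
        unfolding lin_op_def
      proof (intro conjI ballI allI)
        fix f assume f: "f \<in> cspace (subtopology K F)"
        have "continuous_map (subtopology K T) euclideanreal (E f)"
          using Ecs[OF f] by (simp add: cspace_def continuous_map_from_subtopology)
        then have "continuous_map (subtopology K T) euclideanreal (E' f)"
          by (rule continuous_map_eq) (auto simp: E'_def)
        then show "E' f \<in> cspace (subtopology K T)" using TK by (auto simp: cspace_def E'_def)
      next
        fix f g a b assume "f \<in> cspace (subtopology K F)" "g \<in> cspace (subtopology K F)"
        then show "E' (\<lambda>x. a * f x + b * g x) = (\<lambda>y. a * E' f y + b * E' g y)"
          using Elin by (auto simp: E'_def fun_eq_iff)
      qed
      show "topspace (subtopology K T) = {} \<Longrightarrow> topspace (subtopology K F) = {}"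
        using FT by auto
      show "\<bar>E' f y\<bar> \<le> M * nm (subtopology K F) f"
        if "f \<in> cspace (subtopology K F)" "y \<in> topspace (subtopology K T)" for f y
        using M that by (auto simp: E'_def)
    qed
  qed
  then show "\<exists>E. extension_operator (subtopology K T) F E" by blast
qed

lemma cb_Suc: "cb_derivative L (Suc k) = L derived_set_of (cb_derivative L k)"
  by (simp add: cb_derivative_def)

lemma cb_sub_top: "cb_derivative L k \<subseteq> topspace L"
proof (cases k)
  case 0 then show ?thesis by (simp add: cb_derivative_def)
next
  case (Suc m) then show ?thesis by (simp add: cb_Suc derived_set_of_subset_topspace)
qed

lemma cb_sub_1: "cb_derivative L (Suc k) \<subseteq> cb_derivative L 1"
proof -
  have "cb_derivative L 1 = L derived_set_of topspace L" by (simp add: cb_derivative_def)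
  then show ?thesis unfolding cb_Suc by (simp add: derived_set_of_mono cb_sub_top)
qed

lemma cb_subtop:
  "cb_derivative (subtopology L (cb_derivative L 1)) n = cb_derivative L (Suc n)"
proof (induction n)
  case 0
  show ?case using cb_sub_top[of L 1] by (simp add: cb_derivative_def Int_absorb1)
next
  case (Suc n)
  have "cb_derivative (subtopology L (cb_derivative L 1)) (Suc n)
        = cb_derivative L 1 \<inter> L derived_set_of (cb_derivative L 1 \<inter> cb_derivative L (Suc n))"
    by (simp only: cb_Suc Suc derived_set_of_subtopology)
  also have "\<dots> = cb_derivative L 1 \<inter> cb_derivative L (Suc (Suc n))"
    using cb_sub_1[of L n] by (simp only: cb_Suc Int_absorb1)
  also have "\<dots> = cb_derivative L (Suc (Suc n))"
    using cb_sub_1[of L "Suc n"] by (simp only: Int_absorb1)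
  finally show ?case .
qed

lemma step:
  fixes K :: "'a topology" and L :: "'b topology" and \<phi> :: "'a \<Rightarrow> 'b"
  assumes cK: "compact_space K" and HL: "Hausdorff_space L" and cL: "compact_space L"
    and ph: "continuous_map K L \<phi>" and surj: "\<phi> ` topspace K = topspace L"
    and S_def: "S = L derived_set_of topspace L"
    and T_def: "T = {x \<in> topspace K. \<phi> x \<in> S}"
    and P1B: "bounded_lin_op (subtopology K T) (subtopology L S) P1"
    and P1a: "\<forall>f\<in>cspace (subtopology L S). P1 (pullback (subtopology K T) \<phi> f) = f"
    and Eop: "extension_operator K T E"
  shows "\<exists>P. bounded_lin_op K L P \<and> (\<forall>f\<in>cspace L. P (pullback K \<phi> f) = f)"
proof -
  define K1 where "K1 = subtopology K T"
  define L1 where "L1 = subtopology L S"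
  have SL: "S \<subseteq> topspace L" unfolding S_def by (rule derived_set_of_subset_topspace)
  have TK: "T \<subseteq> topspace K" unfolding T_def by auto
  have tK1: "topspace K1 = T" unfolding K1_def using TK by auto
  have tL1: "topspace L1 = S" unfolding L1_def using SL by auto
  have Scl: "closedin L S" unfolding S_def using HL by (rule closedin_derived_set_of)
  have Tcl: "closedin K T" unfolding T_def using ph Scl by (rule closedin_continuous_map_preimage)
  have cK1: "compact_space K1" unfolding K1_def
    by (simp add: Tcl cK closedin_compact_space compact_space_subtopology)
  have cL1: "compact_space L1" unfolding L1_def
    by (simp add: Scl cL closedin_compact_space compact_space_subtopology)
  have ph1: "continuous_map K1 L1 \<phi>" unfolding K1_def L1_def
    using ph by (auto simp: continuous_map_in_subtopology continuous_map_from_subtopology T_def)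
  have ph1': "continuous_map K1 L \<phi>" unfolding K1_def using ph by (simp add: continuous_map_from_subtopology)
  have EB: "bounded_lin_op K1 K E" and Eext: "\<And>u x. u \<in> cspace K1 \<Longrightarrow> x \<in> T \<Longrightarrow> E u x = u x"
    using Eop unfolding extension_operator_def K1_def by auto
  have Ecs: "E u \<in> cspace K" if "u \<in> cspace K1" for u
    using EB that unfolding bounded_lin_op_def lin_op_def by blast
  have Elin: "E (\<lambda>x. a * f x + b * g x) = (\<lambda>y. a * E f y + b * E g y)"
    if "f \<in> cspace K1" "g \<in> cspace K1" for f g a b
    using EB that unfolding bounded_lin_op_def lin_op_def by blast
  obtain ME where ME: "ME \<ge> 0" "\<And>u x. u \<in> cspace K1 \<Longrightarrow> x \<in> topspace K \<Longrightarrow> \<bar>E u x\<bar> \<le> ME * nm K1 u"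
    using bl_pointwise[OF EB cK1 cK] by blast
  have P1B': "bounded_lin_op K1 L1 P1" using P1B unfolding K1_def L1_def .
  have P1cs: "P1 u \<in> cspace L1" if "u \<in> cspace K1" for u
    using P1B' that unfolding bounded_lin_op_def lin_op_def by blast
  have P1lin: "P1 (\<lambda>x. a * f x + b * g x) = (\<lambda>y. a * P1 f y + b * P1 g y)"
    if "f \<in> cspace K1" "g \<in> cspace K1" for f g a b
    using P1B' that unfolding bounded_lin_op_def lin_op_def by blast
  obtain M1 where M1: "M1 \<ge> 0" "\<And>u y. u \<in> cspace K1 \<Longrightarrow> y \<in> S \<Longrightarrow> \<bar>P1 u y\<bar> \<le> M1 * nm K1 u"
    using bl_pointwise[OF P1B' cK1 cL1] tL1 by blast
  have P1a': "\<And>f. f \<in> cspace L1 \<Longrightarrow> P1 (pullback K1 \<phi> f) = f" using P1a unfolding K1_def L1_def by blast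

  define r where "r g = (\<lambda>x. if x \<in> T then g x else (0::real))" for g :: "'a \<Rightarrow> real"
  define c where "c y = (SOME x. x \<in> topspace K \<and> \<phi> x = y)" for y
  have c: "c y \<in> topspace K" "\<phi> (c y) = y" if "y \<in> topspace L" for y
  proof -
    have "\<exists>x. x \<in> topspace K \<and> \<phi> x = y" using that surj by force
    then show "c y \<in> topspace K" "\<phi> (c y) = y" unfolding c_def by (metis (mono_tags, lifting) someI_ex)+
  qed
  have rcs: "r g \<in> cspace K1" if "g \<in> cspace K" for g
  proof -
    have "continuous_map K1 euclideanreal g" using that unfolding K1_def cspace_def
      by (simp add: continuous_map_from_subtopology)
    then have "continuous_map K1 euclideanreal (r g)" by (rule continuous_map_eq) (simp add: tK1 r_def)
    then show ?thesis by (auto simp: cspace_def r_def tK1)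
  qed
  have rlin: "r (\<lambda>x. a * f x + b * g x) = (\<lambda>x. a * r f x + b * r g x)" for f g a b
    by (auto simp: r_def fun_eq_iff)
  have rnm: "nm K1 (r g) \<le> nm K g" if "g \<in> cspace K" for g
    by (rule nm_le) (use that TK nm_ge[OF cK that] nm_nonneg[OF cK that] in \<open>auto simp: tK1 r_def\<close>)

  define H where "H g = P1 (r g)" for g
  define P where "P g = (\<lambda>y. if y \<in> S then H g y else if y \<in> topspace L
      then g (c y) - E (r g) (c y) + E (pullback K1 \<phi> (H g)) (c y) else 0)" for g
  have Hcs: "H g \<in> cspace L1" if "g \<in> cspace K" for g unfolding H_def using rcs[OF that] by (rule P1cs)
  have pbHcs: "pullback K1 \<phi> (H g) \<in> cspace K1" if "g \<in> cspace K" for g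
    by (rule pb_cs[OF ph1 Hcs[OF that]])

  have Pcs: "P g \<in> cspace L" if g: "g \<in> cspace K" for g
  proof -
    define w where "w x = g x - E (r g) x + E (pullback K1 \<phi> (H g)) x" for x
    have wc: "continuous_map K euclideanreal w" unfolding w_def
      using g Ecs[OF rcs[OF g]] Ecs[OF pbHcs[OF g]] unfolding cspace_def
      by (intro continuous_intros) auto
    have wT: "w x = H g (\<phi> x)" if "x \<in> T" for x
      using that Eext[OF rcs[OF g]] Eext[OF pbHcs[OF g]] by (simp add: w_def r_def pullback_def tK1)
    have Pw: "P g y = w (c y)" if "y \<in> topspace L" "y \<notin> S" for y
      using that by (simp add: P_def w_def)
    have Hc: "continuous_map L1 euclideanreal (H g)" using Hcs[OF g] by (simp add: cspace_def)
    have "continuous_map L euclideanreal (P g)"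
    proof (rule cont_eps)
      fix y0 e assume y0: "y0 \<in> topspace L" and e: "(e::real) > 0"
      show "\<exists>U. openin L U \<and> y0 \<in> U \<and> (\<forall>y\<in>U. \<bar>P g y - P g y0\<bar> < e)"
      proof (cases "y0 \<in> S")
        case False
        have "\<not> (\<forall>T. y0 \<in> T \<and> openin L T \<longrightarrow> (\<exists>y. y \<noteq> y0 \<and> y \<in> topspace L \<and> y \<in> T))"
          using False y0 unfolding S_def in_derived_set_of by simp
        then obtain U where U: "y0 \<in> U" "openin L U" "\<forall>y\<in>U. y \<in> topspace L \<longrightarrow> y = y0"
          by blast
        have "U \<subseteq> topspace L" using U(2) by (rule openin_subset)
        then have "\<forall>y\<in>U. y = y0" using U(3) by blast
        then have "\<forall>y\<in>U. \<bar>P g y - P g y0\<bar> < e" using e by simp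
        then show ?thesis using U(1,2) by blast
      next
        case True
        have "openin L1 {y \<in> topspace L1. H g y \<in> ball (H g y0) e}"
          by (rule openin_continuous_map_preimage[OF Hc]) simp
        then obtain V where V: "openin L V" "{y \<in> S. H g y \<in> ball (H g y0) e} = V \<inter> S"
          unfolding L1_def openin_subtopology tL1[unfolded L1_def] by blast
        define W where "W = {x \<in> topspace K. w x \<in> ball (H g y0) e}"
        have Wo: "openin K W" unfolding W_def by (rule openin_continuous_map_preimage[OF wc]) simp
        define C where "C = topspace K - W"
        have Ccl: "closedin K C" unfolding C_def using Wo by (simp add: closedin_diff)
        have "compactin L (\<phi> ` C)" by (rule image_compactin[OF closedin_compact_space[OF cK Ccl] ph])
        then have phC: "closedin L (\<phi> ` C)" using HL compactin_imp_closedin by blast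
        define N where "N = topspace L - \<phi> ` C"
        have No: "openin L N" unfolding N_def using phC by (simp add: openin_diff)
        have y0N: "y0 \<in> N"
        proof -
          have xW: "x \<in> W" if "x \<in> topspace K" "\<phi> x = y0" for x
          proof -
            have "x \<in> T" using that True by (simp add: T_def)
            then show ?thesis using that e wT by (simp add: W_def)
          qed
          have "y0 \<notin> \<phi> ` C"
          proof
            assume "y0 \<in> \<phi> ` C"
            then obtain x where x: "x \<in> C" "\<phi> x = y0" by blast
            then have "x \<in> topspace K" "x \<notin> W" by (simp_all add: C_def)
            then show False using x(2) xW by blast
          qed
          then show ?thesis using y0 by (simp add: N_def)
        qed
        have "y0 \<in> {y \<in> S. H g y \<in> ball (H g y0) e}" using True e by simp
        then have y0V: "y0 \<in> V" using V(2) by blast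
        show ?thesis
        proof (intro exI conjI ballI)
          show "openin L (N \<inter> V)" using No V(1) by (rule openin_Int)
          show "y0 \<in> N \<inter> V" using y0N y0V by blast
          fix y assume y: "y \<in> N \<inter> V"
          then have yL: "y \<in> topspace L" by (simp add: N_def)
          show "\<bar>P g y - P g y0\<bar> < e"
          proof (cases "y \<in> S")
            case True
            have "y \<in> V \<inter> S" using True y by blast
            then have "y \<in> {y \<in> S. H g y \<in> ball (H g y0) e}" unfolding V(2)[symmetric] .
            then have "H g y \<in> ball (H g y0) e" by simp
            then show ?thesis using True \<open>y0 \<in> S\<close> by (simp add: P_def dist_real_def abs_minus_commute)
          next
            case False
            have "y \<notin> \<phi> ` C" using y by (simp add: N_def)
            then have "c y \<notin> C" using c[OF yL] by (metis imageI)
            then have "c y \<in> W" using c[OF yL] by (simp add: C_def)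
            then show ?thesis using Pw[OF yL False] \<open>y0 \<in> S\<close>
              by (simp add: W_def P_def dist_real_def abs_minus_commute)
          qed
        qed
      qed
    qed
    moreover have "P g y = 0" if "y \<notin> topspace L" for y using that SL by (auto simp: P_def)
    ultimately show ?thesis by (simp add: cspace_def)
  qed

  have Plin: "P (\<lambda>x. a * f x + b * g x) = (\<lambda>y. a * P f y + b * P g y)"
    if f: "f \<in> cspace K" and g: "g \<in> cspace K" for f g a b
  proof -
    have H: "H (\<lambda>x. a * f x + b * g x) = (\<lambda>y. a * H f y + b * H g y)"
      unfolding H_def rlin using P1lin[OF rcs[OF f] rcs[OF g]] .
    have E1: "E (r (\<lambda>x. a * f x + b * g x)) = (\<lambda>y. a * E (r f) y + b * E (r g) y)"
      unfolding rlin using Elin[OF rcs[OF f] rcs[OF g]] .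
    have E2: "E (pullback K1 \<phi> (H (\<lambda>x. a * f x + b * g x)))
        = (\<lambda>y. a * E (pullback K1 \<phi> (H f)) y + b * E (pullback K1 \<phi> (H g)) y)"
      unfolding H pb_lin using Elin[OF pbHcs[OF f] pbHcs[OF g]] .
    show ?thesis unfolding P_def E1 E2 unfolding H by (auto simp: fun_eq_iff algebra_simps)
  qed

  have Pbd: "\<bar>P g y\<bar> \<le> (1 + ME + ME * M1 + M1) * nm K g" if g: "g \<in> cspace K" and y: "y \<in> topspace L" for g y
  proof -
    have n0: "0 \<le> nm K g" by (rule nm_nonneg[OF cK g])
    have rg: "nm K1 (r g) \<le> nm K g" by (rule rnm[OF g])
    have hS: "\<bar>H g z\<bar> \<le> M1 * nm K g" if "z \<in> S" for z
    proof -
      have "\<bar>H g z\<bar> \<le> M1 * nm K1 (r g)" unfolding H_def by (rule M1(2)[OF rcs[OF g] that])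
      also have "\<dots> \<le> M1 * nm K g" using rg M1(1) by (rule mult_left_mono) 
      finally show ?thesis .
    qed
    show ?thesis
    proof (cases "y \<in> S")
      case True
      then have "\<bar>P g y\<bar> \<le> M1 * nm K g" using hS by (simp add: P_def)
      also have "\<dots> \<le> (1 + ME + ME * M1 + M1) * nm K g"
        using n0 ME(1) M1(1) by (intro mult_right_mono) auto
      finally show ?thesis .
    next
      case False
      have cy: "c y \<in> topspace K" using c y by blast
      have t1: "\<bar>g (c y)\<bar> \<le> nm K g" by (rule nm_ge[OF cK g cy])
      have t2: "\<bar>E (r g) (c y)\<bar> \<le> ME * nm K g"
      proof -
        have "\<bar>E (r g) (c y)\<bar> \<le> ME * nm K1 (r g)" by (rule ME(2)[OF rcs[OF g] cy])
        also have "\<dots> \<le> ME * nm K g" using rg ME(1) by (rule mult_left_mono)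
        finally show ?thesis .
      qed
      have t3: "\<bar>E (pullback K1 \<phi> (H g)) (c y)\<bar> \<le> ME * (M1 * nm K g)"
      proof -
        have "\<bar>E (pullback K1 \<phi> (H g)) (c y)\<bar> \<le> ME * nm K1 (pullback K1 \<phi> (H g))"
          by (rule ME(2)[OF pbHcs[OF g] cy])
        also have "nm K1 (pullback K1 \<phi> (H g)) \<le> nm L1 (H g)" by (rule pb_nm[OF cL1 ph1 Hcs[OF g]])
        also have "nm L1 (H g) \<le> M1 * nm K g"
          by (rule nm_le) (use hS tL1 M1(1) n0 in auto)
        finally show ?thesis using ME(1) by (simp add: mult_left_mono)
      qed
      have "\<bar>P g y\<bar> \<le> \<bar>g (c y)\<bar> + \<bar>E (r g) (c y)\<bar> + \<bar>E (pullback K1 \<phi> (H g)) (c y)\<bar>"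
        using False y by (simp add: P_def)
      also have "\<dots> \<le> nm K g + ME * nm K g + ME * (M1 * nm K g)" using t1 t2 t3 by linarith
      also have "\<dots> \<le> (1 + ME + ME * M1 + M1) * nm K g"
        using n0 M1(1) by (simp add: algebra_simps)
      finally show ?thesis .
    qed
  qed

  have PB: "bounded_lin_op K L P"
  proof (rule bl_intro[where M="1 + ME + ME * M1 + M1"])
    show "lin_op K L P" unfolding lin_op_def using Pcs Plin by blast
    show "topspace L = {} \<Longrightarrow> topspace K = {}" using surj by auto
  qed (rule Pbd)

  have Pa: "P (pullback K \<phi> f) = f" if f: "f \<in> cspace L" for f
  proof -
    define f1 where "f1 = (\<lambda>y. if y \<in> S then f y else 0)"
    have f1cs: "f1 \<in> cspace L1"
    proof -
      have "continuous_map L1 euclideanreal f" using f unfolding L1_def cspace_def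
        by (simp add: continuous_map_from_subtopology)
      then have "continuous_map L1 euclideanreal f1" by (rule continuous_map_eq) (simp add: tL1 f1_def)
      then show ?thesis by (auto simp: cspace_def f1_def tL1)
    qed
    have rpb: "r (pullback K \<phi> f) = pullback K1 \<phi> f1"
      by (auto simp: r_def pullback_def f1_def tK1 fun_eq_iff T_def)
    have Hf: "H (pullback K \<phi> f) = f1" unfolding H_def rpb by (rule P1a'[OF f1cs])
    show ?thesis
    proof (rule ext)
      fix y show "P (pullback K \<phi> f) y = f y"
      proof (cases "y \<in> topspace L")
        case True
        then show ?thesis using c[OF True] unfolding P_def Hf rpb
          by (auto simp: f1_def pullback_def)
      next
        case False
        then show ?thesis using f SL by (auto simp: P_def cspace_def)
      qed
    qed
  qed
  show ?thesis using PB Pa by blast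
qed

lemma main:
  fixes K :: "'a topology" and L :: "'b topology" and \<phi> :: "'a \<Rightarrow> 'b"
  assumes "cb_derivative L n = {}" "compact_space K" "Hausdorff_space K"
    "compact_space L" "Hausdorff_space L" "continuous_map K L \<phi>" "\<phi> ` topspace K = topspace L"
    "extp K"
  shows "\<exists>P. bounded_lin_op K L P \<and> (\<forall>f\<in>cspace L. P (pullback K \<phi> f) = f)"
  using assms
proof (induction n arbitrary: K L)
  case 0
  then have tL: "topspace L = {}" by (simp add: cb_derivative_def)
  then have tK: "topspace K = {}" using 0 by auto
  have "bounded_lin_op K L (\<lambda>g y. 0)"
    by (rule bl_intro[where M=0]) (auto simp: lin_op_def cspace_def tL tK)
  moreover have "\<forall>f\<in>cspace L. (\<lambda>y. 0) = f" using cspace_empty[OF tL] by auto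
  ultimately show ?case by blast
next
  case (Suc n)
  define S where "S = L derived_set_of topspace L"
  define T where "T = {x \<in> topspace K. \<phi> x \<in> S}"
  have S1: "S = cb_derivative L 1" by (simp add: S_def cb_derivative_def)
  have SL: "S \<subseteq> topspace L" unfolding S_def by (rule derived_set_of_subset_topspace)
  have TK: "T \<subseteq> topspace K" unfolding T_def by auto
  have Scl: "closedin L S" unfolding S_def using Suc.prems(5) by (rule closedin_derived_set_of)
  have Tcl: "closedin K T" unfolding T_def using Suc.prems(6) Scl by (rule closedin_continuous_map_preimage)
  have IH: "\<exists>P. bounded_lin_op (subtopology K T) (subtopology L S) P \<and>
      (\<forall>f\<in>cspace (subtopology L S). P (pullback (subtopology K T) \<phi> f) = f)"
  proof (rule Suc.IH)
    show "cb_derivative (subtopology L S) n = {}" unfolding S1 cb_subtop by (rule Suc.prems(1))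
    show "compact_space (subtopology K T)"
      by (simp add: Tcl Suc.prems(2) closedin_compact_space compact_space_subtopology)
    show "Hausdorff_space (subtopology K T)" using Suc.prems(3) by (rule Hausdorff_space_subtopology)
    show "compact_space (subtopology L S)"
      by (simp add: Scl Suc.prems(4) closedin_compact_space compact_space_subtopology)
    show "Hausdorff_space (subtopology L S)" using Suc.prems(5) by (rule Hausdorff_space_subtopology)
    show "continuous_map (subtopology K T) (subtopology L S) \<phi>"
      using Suc.prems(6) by (auto simp: continuous_map_in_subtopology continuous_map_from_subtopology T_def)
    show "\<phi> ` topspace (subtopology K T) = topspace (subtopology L S)"
    proof -
      have "topspace (subtopology K T) = T" using TK by auto
      moreover have "topspace (subtopology L S) = S" using SL by auto
      moreover have "\<phi> ` T = S" using SL Suc.prems(7) unfolding T_def by auto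
      ultimately show ?thesis by simp
    qed
    show "extp (subtopology K T)" by (rule extp_sub[OF Suc.prems(8) Suc.prems(2) Tcl])
  qed
  then obtain P1 where P1: "bounded_lin_op (subtopology K T) (subtopology L S) P1"
    "\<forall>f\<in>cspace (subtopology L S). P1 (pullback (subtopology K T) \<phi> f) = f" by blast
  obtain E where E: "extension_operator K T E" using Suc.prems(8) Tcl unfolding extp_def by blast
  show ?case
    by (rule step[OF Suc.prems(2) Suc.prems(5) Suc.prems(4) Suc.prems(6) Suc.prems(7) S_def T_def P1 E])
qed

theorem corollary2p5:
  fixes K :: "'a topology" and L :: "'b topology" and \<phi> :: "'a \<Rightarrow> 'b"
  assumes "compact_space K" and "Hausdorff_space K"
    and "compact_space L" and "Hausdorff_space L"
    and "continuous_map K L \<phi>" and "\<phi> ` topspace K = topspace L"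
    and "extension_property K"
    and "scattered_space L" and "finite_height L"
  shows "complemented K (pullback K \<phi> ` cspace L) \<and>
         (\<exists>P. bounded_lin_op K L P \<and> (\<forall>f\<in>cspace L. P (pullback K \<phi> f) = f))"
proof -
  obtain n where n: "cb_derivative L n = {}" using assms(9) unfolding finite_height_def by blast
  obtain P where PB: "bounded_lin_op K L P" and Pa: "\<forall>f\<in>cspace L. P (pullback K \<phi> f) = f"
    using main[OF n assms(1-6) extp_of[OF assms(7)]] by blast
  have Pcs: "P g \<in> cspace L" if "g \<in> cspace K" for g
    using PB that unfolding bounded_lin_op_def lin_op_def by blast
  have Plin: "P (\<lambda>x. a * f x + b * g x) = (\<lambda>y. a * P f y + b * P g y)"
    if "f \<in> cspace K" "g \<in> cspace K" for f g a b
    using PB that unfolding bounded_lin_op_def lin_op_def by blast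
  obtain M where M: "M \<ge> 0" "\<And>f y. f \<in> cspace K \<Longrightarrow> y \<in> topspace L \<Longrightarrow> \<bar>P f y\<bar> \<le> M * nm K f"
    using bl_pointwise[OF PB assms(1,3)] by blast
  define Q where "Q g = pullback K \<phi> (P g)" for g
  have QB: "bounded_lin_op K K Q"
  proof (rule bl_intro[where M=M])
    show "lin_op K K Q" unfolding lin_op_def Q_def
      using pb_cs[OF assms(5) Pcs] Plin pb_lin by auto
    show "\<bar>Q f y\<bar> \<le> M * nm K f" if "f \<in> cspace K" "y \<in> topspace K" for f y
    proof -
      have "\<phi> y \<in> topspace L" using assms(6) that(2) by blast
      then show ?thesis using M(2)[OF that(1)] that(2) by (simp add: Q_def pullback_def)
    qed
  qed simp
  have "complemented K (pullback K \<phi> ` cspace L)"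
    unfolding complemented_def
  proof (intro exI conjI ballI)
    show "bounded_lin_op K K Q" by (rule QB)
    show "Q f \<in> pullback K \<phi> ` cspace L" if "f \<in> cspace K" for f
      unfolding Q_def using Pcs[OF that] by blast
    show "Q g = g" if "g \<in> pullback K \<phi> ` cspace L" for g
      using that Pa by (auto simp: Q_def)
  qed
  then show ?thesis using PB Pa by blast
qed

end
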